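(* In the setting of the context, let $\mu^*\in W_1$ and $U=B_1(\mu^* )$. Then for every $n\ge1$ the family $\{\mathscr{C}^{(n)}_\mu\}_{\mu\in U}$ is stable at $\mu^*$, i.e. there is $\delta>0$ such that (i) $\mathcal{I}_n(f_\mu)=\mathcal{I}_n(f_{\mu^*})$ for every $\mu\in U\cap B_\delta(\mu^* )$, and (ii) $d_H(A^\alpha_\mu,A^\alpha_{\mu^*})\to0$ as $\mu\to\mu^*$ for every $\alpha\in\mathcal{I}_n(f_{\mu^*})$.
   Context: $X\subset\mathbb{R}^d$ is a compact convex polytope (possibly not full-dimensional) with relative interior $\mathrm{relint}(X)$. $\ell\ge1$, $\mathcal{A}=\{-1,1\}^\ell$, $\varphi_i(x)=\Lambda_ix+b_i$ ($i\in\mathcal{A}$) with $\Lambda_i\in GL_d(\mathbb{R})$, $\|\Lambda_i\|<1$ in some operator norm, and $\varphi_i(X)\subset\mathrm{relint}(X)$. $v^{(1)},\dots,v^{(\ell)}$ are unit vectors in $\mathbb{R}^d$. Label map: $\sigma_\mu(x)=(s_1(x),\dots,s_\ell(x))$, $s_j(x)=-1$ if $\langle v^{(j)},x\rangle\le\mu_j$ and $1$ otherwise; $f_\mu(x)=\varphi_{\sigma_\mu(x)}(x)$ on $X$. $A_{i,\mu}=\mathrm{relint}(X)\cap\mathrm{relint}(\{x\in X:\sigma_\mu(x)=i\})$. For $\alpha=(i_0,\dots,i_{n-1})$: $A^\alpha_\mu=A_{i_0,\mu}\cap\varphi_{i_0}^{-1}(A_{i_1,\mu})\cap\cdots\cap(\varphi_{i_{n-2}}\circ\cdots\circ\varphi_{i_0})^{-1}(A_{i_{n-1},\mu})$.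 $\mathcal{I}_n(f_\mu)=\{\alpha\in\mathcal{A}^n:A^\alpha_\mu\ne\emptyset\}$. $\mathscr{C}^{(1)}_\mu=\{A_{i,\mu}\}_{i\in\mathcal{A}}$ and for $n\ge2$, $\mathscr{C}^{(n)}_\mu=\{A^\alpha_\mu:\alpha\in\mathcal{I}_n(f_\mu)\}$. $Z_\alpha=\{\mu:A^\alpha_\mu\ne\emptyset\}$ and $W_1=\mathbb{R}^\ell\setminus\bigcup_{n\ge1}\bigcup_{\alpha\in\mathcal{A}^n}\partial Z_\alpha$. $d_H$ is the Hausdorff distance. *)

theory Defs
  imports "HOL-Analysis.Analysis"
begin

definition labels :: "('l::finite \<Rightarrow> int) set" where
  "labels = {i. \<forall>j. i j \<in> {-1, 1}}"

definition is_norm :: "('a::real_vector \<Rightarrow> real) \<Rightarrow> bool" where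
  "is_norm N \<longleftrightarrow> (\<forall>x. N x = 0 \<longleftrightarrow> x = 0) \<and> (\<forall>c x. N (c *\<^sub>R x) = \<bar>c\<bar> * N x)
     \<and> (\<forall>x y. N (x + y) \<le> N x + N y)"

definition op_norm_wrt :: "('a::real_vector \<Rightarrow> real) \<Rightarrow> ('a \<Rightarrow> 'a) \<Rightarrow> real" where
  "op_norm_wrt N L = (SUP x\<in>{x. N x = 1}. N (L x))"

definition sigma :: "('l::finite \<Rightarrow> 'a::euclidean_space) \<Rightarrow> real^'l \<Rightarrow> 'a \<Rightarrow> ('l \<Rightarrow> int)" where
  "sigma v \<mu> x = (\<lambda>j. if v j \<bullet> x \<le> \<mu> $ j then -1 else 1)"

definition fmap :: "(('l::finite \<Rightarrow> int) \<Rightarrow> 'a \<Rightarrow> 'a) \<Rightarrow> ('l \<Rightarrow> 'a::euclidean_space) \<Rightarrow> real^'l \<Rightarrow> 'a \<Rightarrow> 'a" where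
  "fmap \<phi> v \<mu> x = \<phi> (sigma v \<mu> x) x"

definition Aset :: "'a set \<Rightarrow> ('l::finite \<Rightarrow> 'a::euclidean_space) \<Rightarrow> real^'l \<Rightarrow> ('l \<Rightarrow> int) \<Rightarrow> 'a set" where
  "Aset X v \<mu> i = rel_interior X \<inter> rel_interior {x\<in>X. sigma v \<mu> x = i}"

text \<open>A^alpha_mu for a word alpha = [i0,...,i_{n-1}]:
  A^{i0 # beta} = A_{i0} \<inter> phi_{i0}^{-1}(A^beta), with A^[] = UNIV (only used for n \<ge> 1).\<close>
fun cyl :: "'a set \<Rightarrow> (('l::finite \<Rightarrow> int) \<Rightarrow> 'a \<Rightarrow> 'a) \<Rightarrow> ('l \<Rightarrow> 'a::euclidean_space) \<Rightarrow> real^'l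
             \<Rightarrow> ('l \<Rightarrow> int) list \<Rightarrow> 'a set" where
  "cyl X \<phi> v \<mu> [] = UNIV"
| "cyl X \<phi> v \<mu> (i # \<alpha>) = Aset X v \<mu> i \<inter> (\<phi> i -` cyl X \<phi> v \<mu> \<alpha>)"

definition admissible :: "'a set \<Rightarrow> (('l::finite \<Rightarrow> int) \<Rightarrow> 'a \<Rightarrow> 'a) \<Rightarrow> ('l \<Rightarrow> 'a::euclidean_space) \<Rightarrow> real^'l
             \<Rightarrow> nat \<Rightarrow> ('l \<Rightarrow> int) list set" where
  "admissible X \<phi> v \<mu> n = {\<alpha>. length \<alpha> = n \<and> set \<alpha> \<subseteq> labels \<and> cyl X \<phi> v \<mu> \<alpha> \<noteq> {}}"

definition Zset :: "'a set \<Rightarrow> (('l::finite \<Rightarrow> int) \<Rightarrow> 'a \<Rightarrow> 'a) \<Rightarrow> ('l \<Rightarrow> 'a::euclidean_space)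
             \<Rightarrow> ('l \<Rightarrow> int) list \<Rightarrow> (real^'l) set" where
  "Zset X \<phi> v \<alpha> = {\<mu>. cyl X \<phi> v \<mu> \<alpha> \<noteq> {}}"

definition W1 :: "'a set \<Rightarrow> (('l::finite \<Rightarrow> int) \<Rightarrow> 'a \<Rightarrow> 'a) \<Rightarrow> ('l \<Rightarrow> 'a::euclidean_space) \<Rightarrow> (real^'l) set" where
  "W1 X \<phi> v = UNIV - (\<Union>n\<in>{1..}. \<Union>\<alpha>\<in>{\<alpha>. length \<alpha> = n \<and> set \<alpha> \<subseteq> labels}. frontier (Zset X \<phi> v \<alpha>))"

text \<open>Hausdorff distance (meaningful for nonempty bounded sets).\<close>
definition hausdorff_dist :: "'a::metric_space set \<Rightarrow> 'a set \<Rightarrow> real" where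
  "hausdorff_dist S T = max (SUP x\<in>S. infdist x T) (SUP y\<in>T. infdist y S)"

end

theory Submission
  imports Defs
begin

lemma Aset_sup:
  assumes i: "i \<in> labels" and x: "x \<in> rel_interior X"
    and str: "\<forall>j. if i j = -1 then v j \<bullet> x < \<mu>$j else \<mu>$j < v j \<bullet> x"
  shows "x \<in> Aset X v \<mu> i"
proof -
  have sig: "sigma v \<mu> y = i" if "\<forall>j. if i j = -1 then v j \<bullet> y < \<mu>$j else \<mu>$j < v j \<bullet> y" for y
  proof
    fix j
    have "i j = -1 \<or> i j = 1" using i unfolding labels_def by auto
    then show "sigma v \<mu> y j = i j" using spec[OF that, of j] unfolding sigma_def by auto
  qed
  define S where "S = {x\<in>X. sigma v \<mu> x = i}"
  have xX: "x \<in> X" using x rel_interior_subset by blast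
  obtain e1 where e1: "e1 > 0" "ball x e1 \<inter> affine hull X \<subseteq> X"
    using x mem_rel_interior_ball by blast
  define Op where "Op = {y. \<forall>j. if i j = -1 then v j \<bullet> y < \<mu>$j else \<mu>$j < v j \<bullet> y}"
  have "Op = (\<Inter>j. {y. if i j = -1 then v j \<bullet> y < \<mu>$j else \<mu>$j < v j \<bullet> y})"
    unfolding Op_def by blast
  moreover have "open {y. if i j = -1 then v j \<bullet> y < \<mu>$j else \<mu>$j < v j \<bullet> y}" for j
    by (cases "i j = -1") (simp_all add: open_halfspace_lt open_halfspace_gt)
  ultimately have "open Op" by (simp add: open_INT)
  moreover have "x \<in> Op" using str unfolding Op_def by blast
  ultimately obtain e2 where e2: "e2 > 0" "ball x e2 \<subseteq> Op"
    using open_contains_ball by blast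
  have "ball x (min e1 e2) \<inter> affine hull S \<subseteq> S"
  proof
    fix y assume y: "y \<in> ball x (min e1 e2) \<inter> affine hull S"
    have "affine hull S \<subseteq> affine hull X" unfolding S_def by (intro hull_mono) auto
    then have "y \<in> X" using y e1 by auto
    moreover have "y \<in> Op" using y e2 by auto
    then have "\<forall>j. if i j = -1 then v j \<bullet> y < \<mu>$j else \<mu>$j < v j \<bullet> y"
      unfolding Op_def by blast
    ultimately show "y \<in> S" unfolding S_def using sig by auto
  qed
  moreover have "x \<in> S" unfolding S_def using xX sig str by auto
  ultimately have "x \<in> rel_interior S"
    using e1 e2 mem_rel_interior_ball by (metis min_less_iff_conj)
  then show ?thesis using x unfolding Aset_def S_def by auto
qed

lemma Aset_sub:
  assumes B: "open B" "\<mu> \<in> B" and ne: "\<forall>\<mu>'\<in>B. Aset X v \<mu>' i \<noteq> {}"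
    and x: "x \<in> Aset X v \<mu> i"
  shows "x \<in> rel_interior X \<and> (\<forall>j. if i j = -1 then v j \<bullet> x < \<mu>$j else \<mu>$j < v j \<bullet> x)"
proof -
  define S where "S = {x\<in>X. sigma v \<mu> x = i}"
  have xr: "x \<in> rel_interior X" and xS: "x \<in> rel_interior S"
    using x unfolding Aset_def S_def by auto
  have xS': "x \<in> S" using xS rel_interior_subset by blast
  have "if i j = -1 then v j \<bullet> x < \<mu>$j else \<mu>$j < v j \<bullet> x" for j
  proof (cases "i j = -1")
    case False
    then have "sigma v \<mu> x j \<noteq> -1" using xS' unfolding S_def by auto
    then show ?thesis using False unfolding sigma_def by (auto split: if_splits)
  next
    case True
    then have le: "v j \<bullet> x \<le> \<mu>$j" using xS' unfolding S_def sigma_def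
      by (auto split: if_splits dest: fun_cong[where x=j])
    have "\<not> v j \<bullet> x = \<mu>$j"
    proof
      assume eq: "v j \<bullet> x = \<mu>$j"
      obtain \<epsilon> where \<epsilon>: "\<epsilon> > 0" "ball \<mu> \<epsilon> \<subseteq> B" using B open_contains_ball by blast
      define \<mu>' where "\<mu>' = \<mu> - (\<epsilon>/2) *\<^sub>R axis j 1"
      have "dist \<mu> \<mu>' = \<epsilon>/2" unfolding \<mu>'_def dist_norm using \<epsilon> norm_axis_1[of j] by simp
      then have "\<mu>' \<in> B" using \<epsilon> by auto
      then obtain y where "y \<in> Aset X v \<mu>' i" using ne by blast
      then have "y \<in> {x\<in>X. sigma v \<mu>' x = i}" unfolding Aset_def using rel_interior_subset by blast
      then have yX: "y \<in> X" and sy: "sigma v \<mu>' y = i" by auto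
      have m'j: "\<mu>'$j = \<mu>$j - \<epsilon>/2" unfolding \<mu>'_def by simp
      have m'k: "\<mu>'$k = \<mu>$k" if "k \<noteq> j" for k unfolding \<mu>'_def using that by (simp add: axis_def)
      have yj: "v j \<bullet> y \<le> \<mu>$j - \<epsilon>/2"
        using fun_cong[OF sy, of j] True m'j unfolding sigma_def by (auto split: if_splits)
      have "sigma v \<mu> y = i"
      proof
        fix k show "sigma v \<mu> y k = i k"
        proof (cases "k = j")
          case True then show ?thesis using yj \<open>i j = -1\<close> \<epsilon> unfolding sigma_def by auto
        next
          case False then show ?thesis using fun_cong[OF sy, of k] m'k[OF False] unfolding sigma_def by auto
        qed
      qed
      then have yS: "y \<in> S" unfolding S_def using yX by auto
      obtain e where e: "e > 0" "ball x e \<inter> affine hull S \<subseteq> S" using xS mem_rel_interior_ball by blast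
      define c where "c = e / (2 * (norm (x - y) + 1))"
      have "2 * (norm (x - y) + 1) > 0" by (smt (verit) norm_ge_zero)
      then have c0: "c > 0" using e unfolding c_def by (simp only: divide_pos_pos)
      define z where "z = (1 + c) *\<^sub>R x + (- c) *\<^sub>R y"
      have "z \<in> affine hull S"
        unfolding z_def by (rule mem_affine[OF affine_affine_hull]) (use xS' yS hull_inc in auto)
      moreover have "dist x z < e"
      proof -
        have "x - z = c *\<^sub>R (y - x)" unfolding z_def by (simp add: algebra_simps)
        then have "dist x z = c * norm (x - y)" using c0 by (simp add: dist_norm norm_minus_commute)
        also have "\<dots> = (e/2) * (norm (x - y) / (norm (x - y) + 1))"
          unfolding c_def by simp
        also have "\<dots> < e"
        proof -
          have "norm (x - y) / (norm (x - y) + 1) < 1"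
            by (subst divide_less_eq_1_pos) (auto simp: add_nonneg_pos)
          then have "(e/2) * (norm (x - y) / (norm (x - y) + 1)) < (e/2) * 1"
            using e(1) by (intro mult_strict_left_mono) auto
          then show ?thesis using e(1) by linarith
        qed
        finally show ?thesis .
      qed
      ultimately have "z \<in> S" using e by auto
      then have "v j \<bullet> z \<le> \<mu>$j" using True unfolding S_def sigma_def
        by (auto split: if_splits dest: fun_cong[where x=j])
      moreover have "v j \<bullet> z = (1 + c) * (v j \<bullet> x) - c * (v j \<bullet> y)"
        unfolding z_def by (simp add: inner_add_right inner_diff_right)
      moreover have "c * (v j \<bullet> y) \<le> c * (\<mu>$j - \<epsilon>/2)" using yj c0 by (simp add: mult_left_mono)
      moreover have "c * (\<epsilon>/2) > 0" using c0 \<epsilon> by simp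
      ultimately show False using eq by (simp add: algebra_simps)
    qed
    then show ?thesis using le True by auto
  qed
  then show ?thesis using xr by auto
qed


lemma Aset_jc:
  assumes i: "i \<in> labels" and X: "convex X" and B: "open B" and ne: "\<forall>\<mu>'\<in>B. Aset X v \<mu>' i \<noteq> {}"
    and m: "\<mu>1 \<in> B" "\<mu>2 \<in> B" and x: "x1 \<in> Aset X v \<mu>1 i" "x2 \<in> Aset X v \<mu>2 i"
    and t: "0 \<le> t" "t \<le> 1"
  shows "(1 - t) *\<^sub>R x1 + t *\<^sub>R x2 \<in> Aset X v ((1 - t) *\<^sub>R \<mu>1 + t *\<^sub>R \<mu>2) i"
proof -
  have h1: "x1 \<in> rel_interior X" "\<forall>j. if i j = -1 then v j \<bullet> x1 < \<mu>1$j else \<mu>1$j < v j \<bullet> x1"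
    using Aset_sub[OF B m(1) ne x(1)] by auto
  have h2: "x2 \<in> rel_interior X" "\<forall>j. if i j = -1 then v j \<bullet> x2 < \<mu>2$j else \<mu>2$j < v j \<bullet> x2"
    using Aset_sub[OF B m(2) ne x(2)] by auto
  have R: "(1 - t) *\<^sub>R x1 + t *\<^sub>R x2 \<in> rel_interior X"
    using convex_rel_interior[OF X] h1(1) h2(1) t unfolding convex_def by auto
  moreover have S: "if i j = -1 then v j \<bullet> ((1 - t) *\<^sub>R x1 + t *\<^sub>R x2) < ((1 - t) *\<^sub>R \<mu>1 + t *\<^sub>R \<mu>2)$j
     else ((1 - t) *\<^sub>R \<mu>1 + t *\<^sub>R \<mu>2)$j < v j \<bullet> ((1 - t) *\<^sub>R x1 + t *\<^sub>R x2)" for j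
  proof -
    have a: "v j \<bullet> ((1 - t) *\<^sub>R x1 + t *\<^sub>R x2) = (1-t) * (v j \<bullet> x1) + t * (v j \<bullet> x2)"
      by (simp add: inner_add_right)
    have b: "((1 - t) *\<^sub>R \<mu>1 + t *\<^sub>R \<mu>2)$j = (1-t) * \<mu>1$j + t * \<mu>2$j" by simp
    show ?thesis
    proof (cases "i j = -1")
      case True
      then have "v j \<bullet> x1 < \<mu>1$j" "v j \<bullet> x2 < \<mu>2$j" using h1(2) h2(2) by (metis (full_types))+
      then have "(1-t) * (v j \<bullet> x1) + t * (v j \<bullet> x2) < (1-t) * \<mu>1$j + t * \<mu>2$j"
        using t by (smt (verit) mult_left_mono mult_strict_left_mono)
      then show ?thesis using True a b by simp
    next
      case False
      then have "v j \<bullet> x1 > \<mu>1$j" "v j \<bullet> x2 > \<mu>2$j" using h1(2) h2(2) by (metis (full_types))+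
      then have "(1-t) * (v j \<bullet> x1) + t * (v j \<bullet> x2) > (1-t) * \<mu>1$j + t * \<mu>2$j"
        using t by (smt (verit) mult_left_mono mult_strict_left_mono)
      then show ?thesis using False a b by simp
    qed
  qed
  show ?thesis by (rule Aset_sup[OF i R]) (use S in blast)
qed

lemma cyl_letters:
  "cyl X \<phi> v \<mu> \<alpha> \<noteq> {} \<Longrightarrow> i \<in> set \<alpha> \<Longrightarrow> Aset X v \<mu> i \<noteq> {}"
proof (induction \<alpha>)
  case Nil then show ?case by simp
next
  case (Cons a \<beta>)
  then obtain x where "x \<in> Aset X v \<mu> a" "\<phi> a x \<in> cyl X \<phi> v \<mu> \<beta>" by auto
  then show ?case using Cons by auto
qed

lemma cyl_jc:
  fixes \<Lambda> :: "('l::finite \<Rightarrow> int) \<Rightarrow> 'a::euclidean_space \<Rightarrow> 'a"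
  assumes lin: "\<forall>i\<in>labels. linear (\<Lambda> i)" and X: "convex X" and B: "open B"
  shows "set \<alpha> \<subseteq> labels \<Longrightarrow> (\<forall>i\<in>set \<alpha>. \<forall>\<mu>'\<in>B. Aset X v \<mu>' i \<noteq> {}) \<Longrightarrow>
    \<mu>1 \<in> B \<Longrightarrow> \<mu>2 \<in> B \<Longrightarrow> x1 \<in> cyl X (\<lambda>i x. \<Lambda> i x + b i) v \<mu>1 \<alpha> \<Longrightarrow>
    x2 \<in> cyl X (\<lambda>i x. \<Lambda> i x + b i) v \<mu>2 \<alpha> \<Longrightarrow> 0 \<le> t \<Longrightarrow> t \<le> 1 \<Longrightarrow>
    (1 - t) *\<^sub>R x1 + t *\<^sub>R x2 \<in> cyl X (\<lambda>i x. \<Lambda> i x + b i) v ((1 - t) *\<^sub>R \<mu>1 + t *\<^sub>R \<mu>2) \<alpha>"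
proof (induction \<alpha> arbitrary: x1 x2)
  case Nil then show ?case by simp
next
  case (Cons a \<beta>)
  have a: "a \<in> labels" using Cons.prems by auto
  have A: "(1 - t) *\<^sub>R x1 + t *\<^sub>R x2 \<in> Aset X v ((1 - t) *\<^sub>R \<mu>1 + t *\<^sub>R \<mu>2) a"
    using Aset_jc[OF a X B _ Cons.prems(3,4) _ _ Cons.prems(7,8)] Cons.prems by auto
  have L: "linear (\<Lambda> a)" using lin a by auto
  have eq: "\<Lambda> a ((1 - t) *\<^sub>R x1 + t *\<^sub>R x2) + b a
      = (1 - t) *\<^sub>R (\<Lambda> a x1 + b a) + t *\<^sub>R (\<Lambda> a x2 + b a)"
  proof -
    have "\<Lambda> a ((1 - t) *\<^sub>R x1 + t *\<^sub>R x2) = (1 - t) *\<^sub>R \<Lambda> a x1 + t *\<^sub>R \<Lambda> a x2"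
      by (simp only: linear_add[OF L] linear_scale[OF L])
    then show ?thesis by (simp add: algebra_simps)
  qed
  have "(1 - t) *\<^sub>R (\<Lambda> a x1 + b a) + t *\<^sub>R (\<Lambda> a x2 + b a)
      \<in> cyl X (\<lambda>i x. \<Lambda> i x + b i) v ((1 - t) *\<^sub>R \<mu>1 + t *\<^sub>R \<mu>2) \<beta>"
    using Cons.IH[of "\<Lambda> a x1 + b a" "\<Lambda> a x2 + b a"] Cons.prems by auto
  then show ?case using A eq by simp
qed


lemma hd_bound:
  fixes C :: "'m::real_normed_vector \<Rightarrow> 'a::real_normed_vector set"
  assumes r: "r > 0" and ne: "\<forall>w\<in>ball m0 r. C w \<noteq> {}" and K: "\<forall>w. C w \<subseteq> K"
    and D: "\<forall>x\<in>K. \<forall>y\<in>K. dist x y \<le> D"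
    and jc: "\<And>\<mu>1 \<mu>2 x1 x2 t. \<mu>1 \<in> ball m0 r \<Longrightarrow> \<mu>2 \<in> ball m0 r \<Longrightarrow> x1 \<in> C \<mu>1 \<Longrightarrow> x2 \<in> C \<mu>2
       \<Longrightarrow> 0 \<le> t \<Longrightarrow> t \<le> 1 \<Longrightarrow> (1 - t) *\<^sub>R x1 + t *\<^sub>R x2 \<in> C ((1 - t) *\<^sub>R \<mu>1 + t *\<^sub>R \<mu>2)"
    and mu: "dist \<mu> m0 < r/2"
  shows "\<bar>hausdorff_dist (C \<mu>) (C m0)\<bar> \<le> (2 * D / r) * dist \<mu> m0"
proof -
  define s where "s = r/2"
  define d where "d = dist \<mu> m0"
  have s0: "s > 0" using r s_def by simp
  have ds: "d < s" "0 \<le> d" using mu unfolding s_def d_def by auto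
  have m0B: "m0 \<in> ball m0 r" using r by simp
  have muB: "\<mu> \<in> ball m0 r" using mu r by (simp add: dist_commute)
  have neC0: "C m0 \<noteq> {}" and neC: "C \<mu> \<noteq> {}" using ne m0B muB by auto
  have low: "infdist y (C \<mu>) \<le> (d / s) * D" if y: "y \<in> C m0" for y
  proof (cases "d = 0")
    case True
    then have "\<mu> = m0" unfolding d_def by simp
    then show ?thesis using y True by (simp add: infdist_zero)
  next
    case False
    then have d0: "d > 0" using ds by simp
    define w where "w = m0 + (s / d) *\<^sub>R (\<mu> - m0)"
    have "dist w m0 = (s/d) * d" unfolding w_def d_def dist_norm using s0 d0
      by (simp add: d_def)
    then have "dist m0 w < r" using d0 s0 unfolding s_def by (simp add: dist_commute)
    then have wB: "w \<in> ball m0 r" by simp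
    then obtain xw where xw: "xw \<in> C w" using ne by blast
    define l where "l = d / s"
    have l01: "0 \<le> l" "l \<le> 1" using ds s0 unfolding l_def by auto
    have "(1 - l) *\<^sub>R m0 + l *\<^sub>R w = m0 + (l * (s / d)) *\<^sub>R (\<mu> - m0)"
      unfolding w_def by (simp add: algebra_simps)
    also have "l * (s / d) = 1" unfolding l_def using d0 s0 by simp
    finally have eqm: "(1 - l) *\<^sub>R m0 + l *\<^sub>R w = \<mu>" by simp
    have zC: "(1 - l) *\<^sub>R y + l *\<^sub>R xw \<in> C \<mu>" using jc[OF m0B wB y xw l01] eqm by simp
    have "dist y ((1 - l) *\<^sub>R y + l *\<^sub>R xw) = l * dist y xw"
    proof -
      have "y - ((1 - l) *\<^sub>R y + l *\<^sub>R xw) = l *\<^sub>R (y - xw)" by (simp add: algebra_simps)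
      then show ?thesis using l01 by (simp add: dist_norm)
    qed
    also have "\<dots> \<le> l * D" using D K y xw l01 by (intro mult_left_mono) auto
    finally show ?thesis using infdist_le[OF zC, of y] unfolding l_def by linarith
  qed
  have up: "infdist x (C m0) \<le> (d / s) * D" if x: "x \<in> C \<mu>" for x
  proof (cases "d = 0")
    case True
    then have "\<mu> = m0" unfolding d_def by simp
    then show ?thesis using x True by (simp add: infdist_zero)
  next
    case False
    then have d0: "d > 0" using ds by simp
    define w where "w = m0 - (s / d) *\<^sub>R (\<mu> - m0)"
    have "dist w m0 = (s/d) * d" unfolding w_def d_def dist_norm using s0 d0
      by (simp add: d_def)
    then have "dist m0 w < r" using d0 s0 unfolding s_def by (simp add: dist_commute)
    then have wB: "w \<in> ball m0 r" by simp
    then obtain xw where xw: "xw \<in> C w" using ne by blast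
    define l where "l = d / (s + d)"
    have l01: "0 \<le> l" "l \<le> 1" using ds s0 unfolding l_def by auto
    have sd: "s + d > 0" using d0 s0 by simp
    have ls: "l * (s / d) = s / (s + d)" unfolding l_def using d0 by simp
    have l1: "l + l * (s / d) = 1" unfolding ls unfolding l_def using sd
      by (simp add: add_divide_distrib[symmetric] add.commute)
    have "(1 - l) *\<^sub>R \<mu> + l *\<^sub>R w = (1 - l - l * (s / d)) *\<^sub>R \<mu> + (l + l * (s / d)) *\<^sub>R m0"
      unfolding w_def by (simp add: algebra_simps)
    also have "1 - l - l * (s / d) = 0" using l1 by simp
    also note l1
    finally have eqm: "(1 - l) *\<^sub>R \<mu> + l *\<^sub>R w = m0" by simp
    have zC: "(1 - l) *\<^sub>R x + l *\<^sub>R xw \<in> C m0" using jc[OF muB wB x xw l01] eqm by simp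
    have "dist x ((1 - l) *\<^sub>R x + l *\<^sub>R xw) = l * dist x xw"
    proof -
      have "x - ((1 - l) *\<^sub>R x + l *\<^sub>R xw) = l *\<^sub>R (x - xw)" by (simp add: algebra_simps)
      then show ?thesis using l01 by (simp add: dist_norm)
    qed
    also have "\<dots> \<le> l * D" using D K x xw l01 by (intro mult_left_mono) auto
    also have "\<dots> \<le> (d / s) * D"
    proof -
      have "0 \<le> D" using D K x by (metis dist_self subsetD)
      moreover have "l \<le> d / s" unfolding l_def using s0 d0
        by (simp add: frac_le)
      ultimately show ?thesis by (rule mult_right_mono[rotated])
    qed
    finally show ?thesis using infdist_le[OF zC, of x] by linarith
  qed
  have S1: "(SUP x\<in>C \<mu>. infdist x (C m0)) \<le> (d / s) * D" by (rule cSUP_least[OF neC up])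
  have S2: "(SUP y\<in>C m0. infdist y (C \<mu>)) \<le> (d / s) * D" by (rule cSUP_least[OF neC0 low])
  obtain x0 where x0: "x0 \<in> C \<mu>" using neC by blast
  have "infdist x0 (C m0) \<le> (SUP x\<in>C \<mu>. infdist x (C m0))"
    by (rule cSUP_upper[OF x0]) (rule bdd_aboveI2[OF up])
  then have "0 \<le> (SUP x\<in>C \<mu>. infdist x (C m0))" using infdist_nonneg[of x0 "C m0"] by linarith
  then have "0 \<le> hausdorff_dist (C \<mu>) (C m0)" "hausdorff_dist (C \<mu>) (C m0) \<le> (d / s) * D"
    unfolding hausdorff_dist_def using S1 S2 by auto
  moreover have "(d / s) * D = (2 * D / r) * dist \<mu> m0" unfolding s_def d_def by simp
  ultimately show ?thesis by simp
qed


theorem lemma5p5: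
  fixes X :: "'a::euclidean_space set"
    and \<Lambda> :: "('l::finite \<Rightarrow> int) \<Rightarrow> 'a \<Rightarrow> 'a"
    and b :: "('l \<Rightarrow> int) \<Rightarrow> 'a"
    and v :: "'l \<Rightarrow> 'a"
    and \<mu>s :: "real^'l"
  assumes X_polytope: "polytope X"
    and Lambda_lin: "\<forall>i\<in>labels. linear (\<Lambda> i) \<and> bij (\<Lambda> i)"
    and Lambda_contr: "\<exists>N. is_norm N \<and> (\<forall>i\<in>labels. op_norm_wrt N (\<Lambda> i) < 1)"
    and phi_into: "\<forall>i\<in>labels. (\<lambda>x. \<Lambda> i x + b i) ` X \<subseteq> rel_interior X"
    and v_unit: "\<forall>j. norm (v j) = 1"
    and mu_W1: "\<mu>s \<in> W1 X (\<lambda>i x. \<Lambda> i x + b i) v"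
  shows "\<forall>n\<ge>1. \<exists>\<delta>>0.
           (\<forall>\<mu>\<in>ball \<mu>s 1 \<inter> ball \<mu>s \<delta>.
              admissible X (\<lambda>i x. \<Lambda> i x + b i) v \<mu> n = admissible X (\<lambda>i x. \<Lambda> i x + b i) v \<mu>s n)
         \<and> (\<forall>\<alpha>\<in>admissible X (\<lambda>i x. \<Lambda> i x + b i) v \<mu>s n.
              ((\<lambda>\<mu>. hausdorff_dist (cyl X (\<lambda>i x. \<Lambda> i x + b i) v \<mu> \<alpha>)
                                   (cyl X (\<lambda>i x. \<Lambda> i x + b i) v \<mu>s \<alpha>)) \<longlongrightarrow> 0)
                (at \<mu>s within ball \<mu>s 1))"
proof (intro allI impI)
  fix n :: nat assume n: "n \<ge> 1"
  define \<phi> where "\<phi> = (\<lambda>i x. \<Lambda> i x + b i)"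
  define W where "W = {\<alpha>. length \<alpha> = n \<and> set \<alpha> \<subseteq> (labels :: ('l \<Rightarrow> int) set)}"
  have finL: "finite (labels :: ('l \<Rightarrow> int) set)"
  proof -
    have "labels \<subseteq> PiE UNIV (\<lambda>_::'l. {-1, 1::int})"
      unfolding labels_def by (auto simp: PiE_def extensional_def)
    moreover have "finite (PiE UNIV (\<lambda>_::'l. {-1, 1::int}))" by (intro finite_PiE) auto
    ultimately show ?thesis by (rule finite_subset)
  qed
  have finW: "finite W" unfolding W_def using finite_lists_length_eq[OF finL, of n]
    by (simp add: conj_commute)
  have nf: "\<mu>s \<notin> frontier (Zset X \<phi> v \<alpha>)" if "\<alpha> \<in> W" for \<alpha>
    using mu_W1 that n unfolding W1_def W_def \<phi>_def by auto
  have ev: "eventually (\<lambda>\<mu>. (\<mu> \<in> Zset X \<phi> v \<alpha>) = (\<mu>s \<in> Zset X \<phi> v \<alpha>)) (nhds \<mu>s)"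
    if "\<alpha> \<in> W" for \<alpha>
  proof (cases "\<mu>s \<in> interior (Zset X \<phi> v \<alpha>)")
    case True
    have "eventually (\<lambda>\<mu>. \<mu> \<in> interior (Zset X \<phi> v \<alpha>)) (nhds \<mu>s)"
      by (rule eventually_nhds_in_open[OF open_interior True])
    then show ?thesis using True interior_subset by (auto elim!: eventually_mono)
  next
    case False
    then have F: "\<mu>s \<in> - closure (Zset X \<phi> v \<alpha>)" using nf[OF that] unfolding frontier_def by auto
    have "eventually (\<lambda>\<mu>. \<mu> \<in> - closure (Zset X \<phi> v \<alpha>)) (nhds \<mu>s)"
      by (rule eventually_nhds_in_open[OF _ F]) auto
    then show ?thesis using F closure_subset by (auto elim!: eventually_mono)
  qed
  have "eventually (\<lambda>\<mu>. \<forall>\<alpha>\<in>W. (\<mu> \<in> Zset X \<phi> v \<alpha>) = (\<mu>s \<in> Zset X \<phi> v \<alpha>)) (nhds \<mu>s)"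
    by (rule eventually_ball_finite[OF finW]) (use ev in blast)
  then obtain \<delta> where \<delta>: "\<delta> > 0"
    "\<forall>\<mu>. dist \<mu> \<mu>s < \<delta> \<longrightarrow> (\<forall>\<alpha>\<in>W. (\<mu> \<in> Zset X \<phi> v \<alpha>) = (\<mu>s \<in> Zset X \<phi> v \<alpha>))"
    unfolding eventually_nhds_metric by blast
  have part1: "\<forall>\<mu>\<in>ball \<mu>s 1 \<inter> ball \<mu>s \<delta>. admissible X \<phi> v \<mu> n = admissible X \<phi> v \<mu>s n"
  proof
    fix \<mu> assume "\<mu> \<in> ball \<mu>s 1 \<inter> ball \<mu>s \<delta>"
    then have "dist \<mu> \<mu>s < \<delta>" by (simp add: dist_commute)
    then have h: "\<forall>\<alpha>\<in>W. (\<mu> \<in> Zset X \<phi> v \<alpha>) = (\<mu>s \<in> Zset X \<phi> v \<alpha>)" using \<delta> by blast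
    show "admissible X \<phi> v \<mu> n = admissible X \<phi> v \<mu>s n"
      using h unfolding admissible_def W_def Zset_def by auto
  qed
  have part2: "((\<lambda>\<mu>. hausdorff_dist (cyl X \<phi> v \<mu> \<alpha>) (cyl X \<phi> v \<mu>s \<alpha>)) \<longlongrightarrow> 0)
                (at \<mu>s within ball \<mu>s 1)" if \<alpha>: "\<alpha> \<in> admissible X \<phi> v \<mu>s n" for \<alpha>
  proof -
    have \<alpha>W: "\<alpha> \<in> W" and cne: "cyl X \<phi> v \<mu>s \<alpha> \<noteq> {}" using \<alpha> unfolding admissible_def W_def by auto
    have "\<mu>s \<in> Zset X \<phi> v \<alpha>" using cne unfolding Zset_def by auto
    then have "\<mu>s \<in> interior (Zset X \<phi> v \<alpha>)" using nf[OF \<alpha>W] closure_subset unfolding frontier_def by auto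
    then obtain r where r: "r > 0" "ball \<mu>s r \<subseteq> Zset X \<phi> v \<alpha>" unfolding mem_interior by blast
    define C where "C = (\<lambda>\<mu>. cyl X \<phi> v \<mu> \<alpha>)"
    have ne: "\<forall>w\<in>ball \<mu>s r. C w \<noteq> {}" using r unfolding C_def Zset_def by auto
    have "\<alpha> \<noteq> []" using \<alpha>W n unfolding W_def by auto
    then obtain a \<beta> where a\<beta>: "\<alpha> = a # \<beta>" by (cases \<alpha>) auto
    have K: "\<forall>w. C w \<subseteq> X" unfolding C_def a\<beta> using rel_interior_subset[of X] by (auto simp: Aset_def)
    have bX: "bounded X" using polytope_imp_compact[OF X_polytope] compact_imp_bounded by blast
    have D: "\<forall>x\<in>X. \<forall>y\<in>X. dist x y \<le> diameter X" using diameter_bounded_bound[OF bX] by blast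
    have lin: "\<forall>i\<in>labels. linear (\<Lambda> i)" using Lambda_lin by blast
    have labs: "set \<alpha> \<subseteq> labels" using \<alpha>W unfolding W_def by auto
    have lett: "\<forall>i\<in>set \<alpha>. \<forall>\<mu>'\<in>ball \<mu>s r. Aset X v \<mu>' i \<noteq> {}"
      using ne cyl_letters unfolding C_def by blast
    have jc: "(1 - t) *\<^sub>R x1 + t *\<^sub>R x2 \<in> C ((1 - t) *\<^sub>R \<mu>1 + t *\<^sub>R \<mu>2)"
      if "\<mu>1 \<in> ball \<mu>s r" "\<mu>2 \<in> ball \<mu>s r" "x1 \<in> C \<mu>1" "x2 \<in> C \<mu>2" "0 \<le> t" "t \<le> 1"
      for \<mu>1 \<mu>2 x1 x2 t
      using cyl_jc[OF lin polytope_imp_convex[OF X_polytope] open_ball labs lett that(1,2) _ _ that(5,6), of x1 b x2]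
        that(3,4) unfolding C_def \<phi>_def by blast
    have evb: "eventually (\<lambda>\<mu>. norm (hausdorff_dist (C \<mu>) (C \<mu>s)) \<le> dist \<mu> \<mu>s * (2 * diameter X / r))
        (at \<mu>s within ball \<mu>s 1)"
      unfolding eventually_at
    proof (intro exI[of _ "r/2"] conjI ballI impI)
      show "r/2 > 0" using r by simp
      fix \<mu> assume "\<mu> \<in> ball \<mu>s 1" "\<mu> \<noteq> \<mu>s \<and> dist \<mu> \<mu>s < r / 2"
      then have "dist \<mu> \<mu>s < r/2" by auto
      from hd_bound[OF r(1) ne K D jc this]
      show "norm (hausdorff_dist (C \<mu>) (C \<mu>s)) \<le> dist \<mu> \<mu>s * (2 * diameter X / r)"
        by (simp add: mult.commute)
    qed
    have "((\<lambda>\<mu>. dist \<mu> \<mu>s) \<longlongrightarrow> 0) (at \<mu>s within ball \<mu>s 1)"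
      using tendsto_dist[OF tendsto_ident_at[of \<mu>s "ball \<mu>s 1"] tendsto_const[of \<mu>s]] by simp
    then have "((\<lambda>\<mu>. dist \<mu> \<mu>s * (2 * diameter X / r)) \<longlongrightarrow> 0) (at \<mu>s within ball \<mu>s 1)"
      by (rule tendsto_mult_left_zero)
    from Lim_null_comparison[OF evb this] show ?thesis unfolding C_def .
  qed
  show "\<exists>\<delta>>0. (\<forall>\<mu>\<in>ball \<mu>s 1 \<inter> ball \<mu>s \<delta>.
              admissible X (\<lambda>i x. \<Lambda> i x + b i) v \<mu> n = admissible X (\<lambda>i x. \<Lambda> i x + b i) v \<mu>s n)
         \<and> (\<forall>\<alpha>\<in>admissible X (\<lambda>i x. \<Lambda> i x + b i) v \<mu>s n.
              ((\<lambda>\<mu>. hausdorff_dist (cyl X (\<lambda>i x. \<Lambda> i x + b i) v \<mu> \<alpha>)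
                                   (cyl X (\<lambda>i x. \<Lambda> i x + b i) v \<mu>s \<alpha>)) \<longlongrightarrow> 0)
                (at \<mu>s within ball \<mu>s 1))"
    using \<delta>(1) part1 part2 unfolding \<phi>_def by blast
qed

end
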